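(* Let $k\geq 2$ be an integer. If $G$ is a $k$-leaf power, then $\mathrm{box}(G)\leq k-1$.
   Context: A finite graph $G$ is a $k$-leaf power if there is a tree $T$ and a bijection between $V(G)$ and the set of leaves of $T$ such that two vertices of $G$ are adjacent iff the corresponding leaves are at distance at most $k$ in $T$. The boxicity $\mathrm{box}(G)$ is the minimum integer $t$ such that $G$ is the intersection graph of axis-parallel $t$-dimensional boxes (Cartesian products of $t$ closed real intervals), i.e. there is a map $f$ from $V(G)$ to such boxes with $(u,v)\in E(G)\iff f(u)\cap f(v)\neq\emptyset$ for distinct $u,v$. *)

theory Defs
  imports Complex_Main
begin

definition simple_graph :: "'a set \<Rightarrow> ('a \<Rightarrow> 'a \<Rightarrow> bool) \<Rightarrow> bool" where
  "simple_graph V E \<longleftrightarrow> finite V \<and> (\<forall>u v. E u v \<longrightarrow> u \<in> V \<and> v \<in> V)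
     \<and> (\<forall>u v. E u v \<longrightarrow> E v u) \<and> (\<forall>u. \<not> E u u)"

definition is_walk :: "'a set \<Rightarrow> ('a \<Rightarrow> 'a \<Rightarrow> bool) \<Rightarrow> 'a list \<Rightarrow> 'a \<Rightarrow> 'a \<Rightarrow> bool" where
  "is_walk V E xs u v \<longleftrightarrow> xs \<noteq> [] \<and> set xs \<subseteq> V \<and> hd xs = u \<and> last xs = v
     \<and> (\<forall>i. Suc i < length xs \<longrightarrow> E (xs ! i) (xs ! Suc i))"

definition connected_graph :: "'a set \<Rightarrow> ('a \<Rightarrow> 'a \<Rightarrow> bool) \<Rightarrow> bool" where
  "connected_graph V E \<longleftrightarrow> (\<forall>u\<in>V. \<forall>v\<in>V. \<exists>xs. is_walk V E xs u v)"

definition has_cycle :: "'a set \<Rightarrow> ('a \<Rightarrow> 'a \<Rightarrow> bool) \<Rightarrow> bool" where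
  "has_cycle V E \<longleftrightarrow> (\<exists>xs. length xs \<ge> 3 \<and> distinct xs \<and> is_walk V E xs (hd xs) (last xs)
      \<and> E (last xs) (hd xs))"

definition is_tree :: "'a set \<Rightarrow> ('a \<Rightarrow> 'a \<Rightarrow> bool) \<Rightarrow> bool" where
  "is_tree V E \<longleftrightarrow> simple_graph V E \<and> V \<noteq> {} \<and> connected_graph V E \<and> \<not> has_cycle V E"

definition leaves :: "'a set \<Rightarrow> ('a \<Rightarrow> 'a \<Rightarrow> bool) \<Rightarrow> 'a set" where
  "leaves V E = {x\<in>V. card {y\<in>V. E x y} = 1}"

definition graph_dist :: "'a set \<Rightarrow> ('a \<Rightarrow> 'a \<Rightarrow> bool) \<Rightarrow> 'a \<Rightarrow> 'a \<Rightarrow> nat" where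
  "graph_dist V E u v = (LEAST n. \<exists>xs. is_walk V E xs u v \<and> length xs = Suc n)"

text \<open>k-leaf power. Tree vertices are taken to be natural numbers; every finite tree
is isomorphic to one on a subset of nat, so this loses no generality.\<close>
definition leaf_power :: "nat \<Rightarrow> 'a set \<Rightarrow> ('a \<Rightarrow> 'a \<Rightarrow> bool) \<Rightarrow> bool" where
  "leaf_power k V E \<longleftrightarrow> (\<exists>(VT::nat set) ET \<phi>. is_tree VT ET \<and> bij_betw \<phi> V (leaves VT ET)
     \<and> (\<forall>u\<in>V. \<forall>v\<in>V. u \<noteq> v \<longrightarrow> (E u v \<longleftrightarrow> graph_dist VT ET (\<phi> u) (\<phi> v) \<le> k)))"

text \<open>The t-dimensional axis-parallel box with lower corner l and upper corner r, viewed
as a subset of the copy of R^t inside (nat \<Rightarrow> real) (coordinates \<ge> t are 0).\<close>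
definition box_t :: "nat \<Rightarrow> (nat \<Rightarrow> real) \<Rightarrow> (nat \<Rightarrow> real) \<Rightarrow> (nat \<Rightarrow> real) set" where
  "box_t t l r = {x. (\<forall>i<t. l i \<le> x i \<and> x i \<le> r i) \<and> (\<forall>i\<ge>t. x i = 0)}"

definition box_representation ::
  "nat \<Rightarrow> 'a set \<Rightarrow> ('a \<Rightarrow> 'a \<Rightarrow> bool) \<Rightarrow> ('a \<Rightarrow> nat \<Rightarrow> real) \<Rightarrow> ('a \<Rightarrow> nat \<Rightarrow> real) \<Rightarrow> bool" where
  "box_representation t V E l r \<longleftrightarrow> (\<forall>v\<in>V. \<forall>i<t. l v i \<le> r v i)
     \<and> (\<forall>u\<in>V. \<forall>v\<in>V. u \<noteq> v \<longrightarrow> (E u v \<longleftrightarrow> box_t t (l u) (r u) \<inter> box_t t (l v) (r v) \<noteq> {}))"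

definition boxicity :: "'a set \<Rightarrow> ('a \<Rightarrow> 'a \<Rightarrow> bool) \<Rightarrow> nat" where
  "boxicity V E = (LEAST t. \<exists>l r. box_representation t V E l r)"

end

theory Submission
  imports Defs
begin


lemma succ_nth: "successively P xs \<longleftrightarrow> (\<forall>i. Suc i < length xs \<longrightarrow> P (xs!i) (xs!Suc i))"
proof (induction xs rule: induct_list012)
  case (3 x y zs)
  show ?case
  proof
    assume "successively P (x # y # zs)"
    then show "\<forall>i. Suc i < length (x # y # zs) \<longrightarrow> P ((x # y # zs) ! i) ((x # y # zs) ! Suc i)"
      using 3 by (auto simp: nth_Cons split: nat.splits)
  next
    assume h: "\<forall>i. Suc i < length (x # y # zs) \<longrightarrow> P ((x # y # zs) ! i) ((x # y # zs) ! Suc i)"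
    have "P x y" using h[rule_format, of 0] by simp
    moreover have "successively P (y # zs)"
      using 3(2) h by (auto simp: nth_Cons)
    ultimately show "successively P (x # y # zs)" by simp
  qed
qed auto

lemma walk_iff: "is_walk V E xs u v \<longleftrightarrow> xs \<noteq> [] \<and> set xs \<subseteq> V \<and> hd xs = u \<and> last xs = v \<and> successively E xs"
  unfolding is_walk_def succ_nth by blast

lemma walk_single: "u \<in> V \<Longrightarrow> is_walk V E [u] u u"
  by (simp add: walk_iff)

lemma walk_join:
  assumes "is_walk V E xs a b" "is_walk V E ys b c"
  shows "is_walk V E (xs @ tl ys) a c"
proof (cases "tl ys")
  case Nil
  then have "ys = [b]" using assms(2) unfolding walk_iff by (cases ys) auto
  then show ?thesis using assms by (auto simp: walk_iff)
next
  case (Cons y zs)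
  then have ys: "ys = b # y # zs" using assms(2) unfolding walk_iff by (cases ys) auto
  show ?thesis using assms unfolding walk_iff ys
    by (auto simp: successively_append_iff)
qed

lemma walk_rev:
  assumes "\<forall>u v. E u v \<longrightarrow> E v u" "is_walk V E xs a b"
  shows "is_walk V E (rev xs) b a"
proof -
  have "successively E xs" using assms(2) by (simp add: walk_iff)
  then have "successively (\<lambda>x y. E y x) xs" by (rule successively_mono) (use assms(1) in blast)
  then show ?thesis using assms(2) by (auto simp: walk_iff hd_rev last_rev)
qed

lemma walk_prefix:
  assumes "is_walk V E xs a b" "0 < n" "n \<le> length xs"
  shows "is_walk V E (take n xs) a (xs ! (n-1))"
proof -
  have "last (take n xs) = xs ! (n-1)"
    using assms(2,3) by (subst last_conv_nth) (auto simp: min_def)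
  then show ?thesis using assms unfolding is_walk_def
    by (auto dest: in_set_takeD)
qed

lemma walk_suffix:
  assumes "is_walk V E xs a b" "n < length xs"
  shows "is_walk V E (drop n xs) (xs ! n) b"
  using assms unfolding is_walk_def
  by (auto simp: hd_drop_conv_nth dest: in_set_dropD)

lemma walk_mono: "is_walk V E xs a b \<Longrightarrow> set xs \<subseteq> V' \<Longrightarrow> is_walk V' E xs a b"
  by (auto simp: is_walk_def)

lemma succ_split: "successively P (xs @ y # ys) \<longleftrightarrow> successively P (xs @ [y]) \<and> successively P (y # ys)"
  by (auto simp: successively_append_iff)

lemma walk_distinct:
  "is_walk V E xs a b \<Longrightarrow> \<exists>ys. is_walk V E ys a b \<and> distinct ys \<and> set ys \<subseteq> set xs \<and> length ys \<le> length xs"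
proof (induction "length xs" arbitrary: xs rule: less_induct)
  case less
  show ?case
  proof (cases "distinct xs")
    case True then show ?thesis using less by blast
  next
    case False
    then obtain p y q s where xs: "xs = p @ [y] @ q @ [y] @ s" using not_distinct_decomp by blast
    have w: "is_walk V E (p @ [y] @ s) a b"
    proof -
      have s1: "successively E ((p @ [y] @ q) @ y # s)" using less(2) xs by (simp add: walk_iff)
      then have "successively E (y # s)" using succ_split[of E "p @ [y] @ q" y s] by blast
      moreover have "successively E (p @ [y] @ q)" using s1 successively_append_iff[of E "p @ [y] @ q" "y # s"] by blast
      then have "successively E (p @ [y])" using successively_append_iff[of E "p @ [y]" q] by simp
      ultimately have "successively E (p @ y # s)" using succ_split[of E p y s] by blast
      then show ?thesis using less(2) unfolding xs walk_iff by (auto simp: hd_append)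
    qed
    have "length (p @ [y] @ s) < length xs" using xs by simp
    from less(1)[OF this w] obtain ys where "is_walk V E ys a b \<and> distinct ys \<and> set ys \<subseteq> set (p @ [y] @ s) \<and> length ys \<le> length (p @ [y] @ s)" by blast
    then show ?thesis using xs by auto
  qed
qed

lemma dist_le: "is_walk V E xs u v \<Longrightarrow> graph_dist V E u v \<le> length xs - 1"
  unfolding graph_dist_def
  by (rule Least_le) (auto simp: is_walk_def)

lemma dist_ex: "is_walk V E xs u v \<Longrightarrow> \<exists>ys. is_walk V E ys u v \<and> length ys = Suc (graph_dist V E u v)"
  unfolding graph_dist_def
  by (rule LeastI[of _ "length xs - 1"]) (auto simp: is_walk_def)



lemma set_tl: "x \<in> set (tl xs) \<Longrightarrow> x \<in> set xs" by (cases xs) auto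

lemma last_nth_Suc: "length xs = Suc n \<Longrightarrow> xs ! n = last xs"
  by (cases xs) (auto simp: last_conv_nth)

locale rtree =
  fixes VT :: "nat set" and ET :: "nat \<Rightarrow> nat \<Rightarrow> bool" and r :: nat
  assumes tree: "is_tree VT ET" and rin: "r \<in> VT"
begin

abbreviation D where "D \<equiv> graph_dist VT ET"
definition dep where "dep x = D r x"

lemma fin: "finite VT" and symE: "\<And>u v. ET u v \<Longrightarrow> ET v u" and irr: "\<And>u. \<not> ET u u"
  and inV: "\<And>u v. ET u v \<Longrightarrow> u \<in> VT \<and> v \<in> VT"
  using tree unfolding is_tree_def simple_graph_def by blast+

lemma nocyc: "\<not> has_cycle VT ET" using tree unfolding is_tree_def by blast

lemma conn: assumes "u \<in> VT" "v \<in> VT" shows "\<exists>xs. is_walk VT ET xs u v"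
proof -
  have "connected_graph VT ET" using tree by (simp add: is_tree_def)
  then show ?thesis using assms unfolding connected_graph_def by blast
qed

lemma shortest: assumes "u \<in> VT" "v \<in> VT" shows "\<exists>xs. is_walk VT ET xs u v \<and> length xs = Suc (D u v)"
proof -
  obtain xs where "is_walk VT ET xs u v" using conn[OF assms] by blast
  then show ?thesis by (rule dist_ex)
qed

lemma rev_walk: "is_walk VT ET xs a b \<Longrightarrow> is_walk VT ET (rev xs) b a"
  by (rule walk_rev) (use symE in blast)+

lemma walk_ends: "is_walk VT ET xs a b \<Longrightarrow> a \<in> VT \<and> b \<in> VT"
  unfolding is_walk_def by (metis hd_in_set last_in_set subsetD)

lemma dist_sym: "u \<in> VT \<Longrightarrow> v \<in> VT \<Longrightarrow> D u v = D v u"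
proof -
  have *: "D v u \<le> D u v" if h: "u \<in> VT" "v \<in> VT" for u v
  proof -
    obtain xs where "is_walk VT ET xs u v" "length xs = Suc (D u v)" using shortest h by blast
    then show ?thesis using dist_le[OF rev_walk] by fastforce
  qed
  assume "u \<in> VT" "v \<in> VT" then show ?thesis using *[of u v] *[of v u] by simp
qed

lemma tri: "u \<in> VT \<Longrightarrow> v \<in> VT \<Longrightarrow> w \<in> VT \<Longrightarrow> D u w \<le> D u v + D v w"
proof -
  assume a: "u \<in> VT" "v \<in> VT" "w \<in> VT"
  obtain xs where x: "is_walk VT ET xs u v" "length xs = Suc (D u v)" using shortest a by blast
  obtain ys where y: "is_walk VT ET ys v w" "length ys = Suc (D v w)" using shortest a by blast
  have "D u w \<le> length (xs @ tl ys) - 1" by (rule dist_le[OF walk_join[OF x(1) y(1)]])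
  then show ?thesis using x y by simp
qed

lemma dist_edge: "ET u v \<Longrightarrow> D u v \<le> 1"
proof -
  assume e: "ET u v"
  have "is_walk VT ET [u, v] u v" using e inV[OF e] by (simp add: walk_iff)
  from dist_le[OF this] show ?thesis by simp
qed

lemma dist0: "u \<in> VT \<Longrightarrow> v \<in> VT \<Longrightarrow> D u v = 0 \<Longrightarrow> u = v"
proof -
  assume a: "u \<in> VT" "v \<in> VT" "D u v = 0"
  obtain xs where x: "is_walk VT ET xs u v" "length xs = Suc (D u v)" using shortest a by blast
  then obtain z where "xs = [z]" using a(3) by (cases xs) auto
  then show ?thesis using x by (simp add: walk_iff)
qed

lemma dist_self: "u \<in> VT \<Longrightarrow> D u u = 0"
  using dist_le[OF walk_single[of u VT ET]] by simp

lemma no_cyc: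
  assumes "distinct ys" "is_walk VT ET ys a b" "a \<noteq> b" "x \<in> VT" "x \<notin> set ys" "ET x a" "ET b x"
  shows False
proof -
  have "2 \<le> length ys"
  proof (rule ccontr)
    assume "\<not> 2 \<le> length ys"
    then obtain z where "ys = [z]" using assms(2) unfolding walk_iff
      by (cases ys) (auto simp: Suc_le_eq)
    then show False using assms(2,3) by (simp add: walk_iff)
  qed
  moreover have "is_walk VT ET (x # ys) x b"
    using assms(2,4,6) by (cases ys) (auto simp: walk_iff)
  ultimately have "has_cycle VT ET" unfolding has_cycle_def
    using assms by (intro exI[of _ "x # ys"]) (auto simp: walk_iff)
  then show False using nocyc by simp
qed

lemma walk_dep: "is_walk VT ET xs r y \<Longrightarrow> j < length xs \<Longrightarrow> dep (xs!j) \<le> j"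
  unfolding dep_def using dist_le[OF walk_prefix[of VT ET xs r y "Suc j"]] by simp

lemma uniq_aux:
  assumes "a \<noteq> b" "is_walk VT ET Wa r a" "is_walk VT ET Wb r b" "x \<notin> set Wa" "x \<notin> set Wb"
    "x \<in> VT" "ET x a" "ET x b"
  shows False
proof -
  have w: "is_walk VT ET (rev Wa @ tl Wb) a b" by (rule walk_join[OF rev_walk[OF assms(2)] assms(3)])
  have "set (rev Wa @ tl Wb) \<subseteq> set Wa \<union> set Wb" by (auto dest: set_tl)
  obtain ys where ys: "is_walk VT ET ys a b" "distinct ys" "set ys \<subseteq> set (rev Wa @ tl Wb)"
    using walk_distinct[OF w] by blast
  have "x \<notin> set ys" using ys(3) assms(4,5) by (auto dest: set_tl)
  then show False using no_cyc[OF ys(2,1) assms(1,6)] assms(7,8) symE by blast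
qed

lemma notin_dep: "(\<And>j. j < length W \<Longrightarrow> dep (W!j) < dep x) \<Longrightarrow> x \<notin> set W"
  by (metis in_set_conv_nth less_irrefl)

lemma succ_edge: "is_walk V E xs a b \<Longrightarrow> Suc i < length xs \<Longrightarrow> E (xs!i) (xs!Suc i)"
  unfolding is_walk_def by blast

lemma dep_r: "dep r = 0" unfolding dep_def using dist_self[OF rin] .

lemma edge_dep_ne: assumes e: "ET x y" shows "dep x \<noteq> dep y"
proof
  assume eq: "dep x = dep y"
  have xy: "x \<in> VT" "y \<in> VT" "x \<noteq> y" using inV[OF e] irr e by auto
  obtain n where n: "dep x = n" by blast
  have "n \<noteq> 0"
  proof
    assume "n = 0"
    then have "r = x" "r = y" using dist0[OF rin] xy eq n unfolding dep_def by auto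
    then show False using xy by simp
  qed
  then obtain m where m: "n = Suc m" by (cases n) auto
  obtain Px where px: "is_walk VT ET Px r x" "length Px = Suc (dep x)" using shortest[OF rin xy(1)] unfolding dep_def by blast
  obtain Py where py: "is_walk VT ET Py r y" "length Py = Suc (dep y)" using shortest[OF rin xy(2)] unfolding dep_def by blast
  have wa: "is_walk VT ET (take (Suc m) Px) r (Px ! m)" using walk_prefix[OF px(1), of "Suc m"] px(2) n m by simp
  have dx1: "dep (Px ! m) \<le> m" using walk_dep[OF px(1)] px(2) n m by simp
  have f1: "x \<notin> set (take (Suc m) Px)"
  proof (rule notin_dep)
    fix j assume "j < length (take (Suc m) Px)"
    then have "j \<le> m" "j < length Px" by auto
    then show "dep (take (Suc m) Px ! j) < dep x" using walk_dep[OF px(1)] n m by fastforce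
  qed
  have f2: "x \<notin> set Py"
  proof
    assume "x \<in> set Py"
    then obtain j where j: "j < length Py" "Py ! j = x" by (auto simp: in_set_conv_nth)
    then have "dep x \<le> j" using walk_dep[OF py(1)] by metis
    then have "j = length Py - 1" using j(1) py(2) eq by simp
    then have "x = last Py" using j py(1) unfolding walk_iff by (metis last_conv_nth)
    then show False using py(1) xy by (simp add: walk_iff)
  qed
  have f3: "ET x (Px ! m)"
  proof -
    have "Px ! Suc m = last Px" using px(2) n m last_nth_Suc[of Px "Suc m"] by simp
    then have "Px ! Suc m = x" using px(1) by (simp add: walk_iff)
    then have "ET (Px ! m) x" using succ_edge[OF px(1), of m] px(2) n m by simp
    then show ?thesis by (rule symE)
  qed
  have ne: "Px ! m \<noteq> y" using dx1 eq n m by auto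
  show False by (rule uniq_aux[OF ne wa py(1) f1 f2 xy(1) f3 e])
qed

lemma edge_dep: assumes e: "ET x y" shows "dep y = dep x + 1 \<or> dep x = dep y + 1"
proof -
  have xy: "x \<in> VT" "y \<in> VT" using inV[OF e] by auto
  have "dep y \<le> dep x + 1" using tri[OF rin xy] dist_edge[OF e] unfolding dep_def by simp
  moreover have "dep x \<le> dep y + 1" using tri[OF rin xy(2,1)] dist_edge[OF symE[OF e]] unfolding dep_def by simp
  ultimately show ?thesis using edge_dep_ne[OF e] by linarith
qed

lemma short_walk_dep:
  assumes "is_walk VT ET W r y" "length W = Suc (dep y)"
  shows "x \<notin> set W \<or> x = y \<or> dep x < dep y"
proof -
  { assume "x \<in> set W"
    then obtain j where j: "j < length W" "W ! j = x" by (auto simp: in_set_conv_nth)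
    then have "dep x \<le> j" using walk_dep[OF assms(1)] by metis
    moreover have "j = length W - 1 \<Longrightarrow> x = y" using j assms(1) unfolding walk_iff by (metis last_conv_nth)
    ultimately have "x = y \<or> dep x < dep y" using j(1) assms(2) by fastforce }
  then show ?thesis by blast
qed

lemma par_uniq:
  assumes "ET x y" "ET x z" "dep y + 1 = dep x" "dep z + 1 = dep x"
  shows "y = z"
proof (rule ccontr)
  assume ne: "y \<noteq> z"
  have v: "x \<in> VT" "y \<in> VT" "z \<in> VT" using inV assms by blast+
  obtain Py where py: "is_walk VT ET Py r y" "length Py = Suc (dep y)" using shortest[OF rin v(2)] unfolding dep_def by blast
  obtain Pz where pz: "is_walk VT ET Pz r z" "length Pz = Suc (dep z)" using shortest[OF rin v(3)] unfolding dep_def by blast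
  have "x \<notin> set Py" using short_walk_dep[OF py, of x] assms by auto
  moreover have "x \<notin> set Pz" using short_walk_dep[OF pz, of x] assms by auto
  ultimately show False using uniq_aux[OF ne py(1) pz(1) _ _ v(1) assms(1,2)] by blast
qed

lemma short_uniq:
  "is_walk VT ET xs r x \<Longrightarrow> length xs = Suc (dep x) \<Longrightarrow> is_walk VT ET ys r x \<Longrightarrow> length ys = Suc (dep x) \<Longrightarrow> xs = ys"
proof (induction "dep x" arbitrary: x xs ys)
  case 0
  then obtain a b where "xs = [a]" "ys = [b]" by (metis length_0_conv length_Suc_conv)
  then show ?case using 0 by (simp add: walk_iff)
next
  case (Suc m)
  have key: "dep (zs ! m) = m \<and> ET x (zs ! m) \<and> is_walk VT ET (take (Suc m) zs) r (zs ! m)"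
    if z: "is_walk VT ET zs r x" "length zs = Suc (dep x)" for zs
  proof -
    have w: "is_walk VT ET (take (Suc m) zs) r (zs ! m)" using walk_prefix[OF z(1), of "Suc m"] z(2) Suc(2)[symmetric] by simp
    have d: "dep (zs ! m) \<le> m" using walk_dep[OF z(1)] z(2) Suc(2)[symmetric] by simp
    have e: "ET (zs ! m) (zs ! Suc m)" using succ_edge[OF z(1), of m] z(2) Suc(2)[symmetric] by simp
    have "zs ! Suc m = x" using z Suc(2)[symmetric] last_nth_Suc[of zs "Suc m"] by (simp add: walk_iff)
    then have e2: "ET x (zs ! m)" using symE[OF e] by simp
    then have "dep (zs ! m) = m" using edge_dep[OF e2] d Suc(2) by linarith
    then show ?thesis using e2 w by simp
  qed
  have kx: "dep (xs ! m) = m" "ET x (xs ! m)" "is_walk VT ET (take (Suc m) xs) r (xs ! m)" using key Suc(3,4) by auto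
  have ky: "dep (ys ! m) = m" "ET x (ys ! m)" "is_walk VT ET (take (Suc m) ys) r (ys ! m)" using key Suc(5,6) by auto
  have eq: "xs ! m = ys ! m" using par_uniq[OF kx(2) ky(2)] kx(1) ky(1) Suc(2) by simp
  have tk: "take (Suc m) xs = take (Suc m) ys"
    using Suc(1)[of "xs ! m" "take (Suc m) xs" "take (Suc m) ys"] kx ky eq Suc(4,6,2) by simp
  have lx: "xs ! Suc m = x" using Suc(3,4) Suc(2)[symmetric] last_nth_Suc[of xs "Suc m"] by (simp add: walk_iff)
  have ly: "ys ! Suc m = x" using Suc(5,6) Suc(2)[symmetric] last_nth_Suc[of ys "Suc m"] by (simp add: walk_iff)
  show ?case
  proof (rule nth_equalityI)
    show "length xs = length ys" using Suc by simp
    fix i assume "i < length xs"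
    then have "i \<le> m \<or> i = Suc m" using Suc(4,2) by auto
    then show "xs ! i = ys ! i"
    proof
      assume "i \<le> m"
      then show ?thesis using tk by (metis lessI le_imp_less_Suc nth_take)
    qed (use lx ly in simp)
  qed
qed

end


context rtree begin

definition P where "P x = (THE xs. is_walk VT ET xs r x \<and> length xs = Suc (dep x))"

lemma P_walk: assumes "x \<in> VT" shows "is_walk VT ET (P x) r x" "length (P x) = Suc (dep x)"
proof -
  obtain xs where xs: "is_walk VT ET xs r x" "length xs = Suc (dep x)"
    using shortest[OF rin assms] unfolding dep_def by blast
  have "is_walk VT ET (P x) r x \<and> length (P x) = Suc (dep x)"
    unfolding P_def by (rule theI[of _ xs]) (use xs short_uniq in blast)+
  then show "is_walk VT ET (P x) r x" "length (P x) = Suc (dep x)" by auto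
qed

lemma P_eq: assumes "is_walk VT ET xs r x" "length xs = Suc (dep x)" shows "P x = xs"
proof -
  have x: "x \<in> VT" using walk_ends[OF assms(1)] by simp
  show ?thesis using short_uniq[OF P_walk[OF x] assms] .
qed

lemma P_basic: assumes "x \<in> VT"
  shows "P x \<noteq> []" "hd (P x) = r" "last (P x) = x" "set (P x) \<subseteq> VT"
  using P_walk[OF assms] by (auto simp: walk_iff)

lemma P_distinct: assumes "x \<in> VT" shows "distinct (P x)"
proof -
  obtain ys where ys: "is_walk VT ET ys r x" "distinct ys" "length ys \<le> length (P x)"
    using walk_distinct[OF P_walk(1)[OF assms]] by blast
  have "dep x \<le> length ys - 1" using dist_le[OF ys(1)] unfolding dep_def .
  moreover have "ys \<noteq> []" using ys(1) by (simp add: walk_iff)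
  ultimately have "length ys = Suc (dep x)" using ys(3) P_walk(2)[OF assms] by (cases ys) auto
  then show ?thesis using P_eq[OF ys(1)] ys(2) by simp
qed

lemma P_nth: assumes "x \<in> VT" "j < length (P x)"
  shows "dep (P x ! j) = j" "P (P x ! j) = take (Suc j) (P x)"
proof -
  have w: "is_walk VT ET (P x) r x" and l: "length (P x) = Suc (dep x)" using P_walk[OF assms(1)] by auto
  have z: "P x ! j \<in> VT" using P_basic(4)[OF assms(1)] assms(2) by (meson nth_mem subsetD)
  have le: "dep (P x ! j) \<le> j" using walk_dep[OF w assms(2)] .
  have "D (P x ! j) x \<le> length (drop j (P x)) - 1" using dist_le[OF walk_suffix[OF w assms(2)]] .
  then have "D (P x ! j) x \<le> dep x - j" using l by simp
  moreover have "dep x \<le> dep (P x ! j) + D (P x ! j) x" using tri[OF rin z assms(1)] unfolding dep_def .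
  ultimately have "j \<le> dep (P x ! j)" using assms(2) l by linarith
  then show d: "dep (P x ! j) = j" using le by simp
  have "is_walk VT ET (take (Suc j) (P x)) r (P x ! j)" using walk_prefix[OF w, of "Suc j"] assms(2) by simp
  then show "P (P x ! j) = take (Suc j) (P x)" by (rule P_eq) (use d assms(2) in simp)
qed

lemma P_snoc: assumes "x \<in> VT" shows "P x = take (dep x) (P x) @ [x]"
proof -
  have l: "length (P x) = Suc (dep x)" using P_walk[OF assms] by simp
  have "P x = take (dep x) (P x) @ [P x ! dep x]" using l
    by (metis Suc_le_eq le_refl take_Suc_conv_app_nth take_all)
  moreover have "P x ! dep x = x" using l last_nth_Suc[OF l] P_basic(3)[OF assms] by simp
  ultimately show ?thesis by simp
qed

lemma edge_P: assumes e: "ET x y" and d: "dep x = dep y + 1" shows "P x = P y @ [x]"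
proof -
  have x: "x \<in> VT" using inV[OF e] by simp
  have l: "length (P x) = Suc (dep x)" using P_walk[OF x] by simp
  let ?z = "P x ! dep y"
  have dz: "dep ?z = dep y" and pz: "P ?z = take (dep x) (P x)" using P_nth[OF x, of "dep y"] l d by auto
  have "ET ?z (P x ! Suc (dep y))" using succ_edge[OF P_walk(1)[OF x], of "dep y"] l d by simp
  moreover have "P x ! Suc (dep y) = x" using last_nth_Suc[OF l] P_basic(3)[OF x] d by simp
  ultimately have "ET x ?z" using symE by metis
  then have "?z = y" using par_uniq[OF _ e] dz d by simp
  then show ?thesis using P_snoc[OF x] pz by simp
qed

lemma mem_P: assumes "x \<in> VT" "y \<in> set (P x)" shows "\<exists>t. P x = P y @ t"
proof -
  obtain j where j: "j < length (P x)" "P x ! j = y" using assms(2) by (auto simp: in_set_conv_nth)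
  then have "P y = take (Suc j) (P x)" using P_nth(2)[OF assms(1) j(1)] by simp
  then show ?thesis by (metis append_take_drop_id)
qed

lemma P_r: "P r = [r]"
  using P_walk[OF rin] P_basic[OF rin] dep_r by (cases "P r") auto

end


lemma list_split:
  "xs \<noteq> ys \<Longrightarrow> (\<forall>t. xs \<noteq> ys @ t) \<Longrightarrow> (\<forall>t. ys \<noteq> xs @ t) \<Longrightarrow>
   \<exists>C a b s t. a \<noteq> b \<and> xs = C @ a # s \<and> ys = C @ b # t"
proof (induction xs arbitrary: ys)
  case Nil then show ?case by auto
next
  case (Cons x xs)
  show ?case
  proof (cases ys)
    case Nil then show ?thesis using Cons(3) by auto
  next
    case (Cons y ys')
    show ?thesis
    proof (cases "x = y")
      case False then show ?thesis using Cons by (intro exI[of _ "[]"]) auto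
    next
      case True
      have "xs \<noteq> ys'" "\<forall>t. xs \<noteq> ys' @ t" "\<forall>t. ys' \<noteq> xs @ t" using Cons.prems Cons True by auto
      from Cons.IH[OF this] obtain C a b s t where "a \<noteq> b \<and> xs = C @ a # s \<and> ys' = C @ b # t" by blast
      then show ?thesis using Cons True by (intro exI[of _ "x # C"]) auto
    qed
  qed
qed

lemma first_exit: "hd xs \<in> S \<Longrightarrow> last xs \<notin> S \<Longrightarrow> xs \<noteq> [] \<Longrightarrow>
  \<exists>i. Suc i < length xs \<and> xs ! i \<in> S \<and> xs ! Suc i \<notin> S"
proof (induction xs)
  case Nil then show ?case by simp
next
  case (Cons x xs)
  show ?case
  proof (cases xs)
    case Nil then show ?thesis using Cons by simp
  next
    case (Cons y ys)
    show ?thesis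
    proof (cases "y \<in> S")
      case True
      then obtain i where "Suc i < length xs \<and> xs ! i \<in> S \<and> xs ! Suc i \<notin> S"
        using Cons.IH Cons.prems \<open>xs = y # ys\<close> by auto
      then show ?thesis by (intro exI[of _ "Suc i"]) auto
    next
      case False then show ?thesis using Cons.prems \<open>xs = y # ys\<close> by (intro exI[of _ 0]) auto
    qed
  qed
qed

locale rtree2 = rtree + assumes rnl: "r \<notin> leaves VT ET"
begin

abbreviation L where "L \<equiv> leaves VT ET"

lemma L_VT: "L \<subseteq> VT" unfolding leaves_def by auto

lemma two_nbrs: assumes "a \<noteq> b" "ET x a" "ET x b" shows "x \<notin> L"
proof
  assume "x \<in> L"
  then have c: "card {y \<in> VT. ET x y} = 1" unfolding leaves_def by simp
  have "{a, b} \<subseteq> {y \<in> VT. ET x y}" using assms inV by blast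
  moreover have "finite {y \<in> VT. ET x y}" using fin by simp
  ultimately have "card {a, b} \<le> 1" using card_mono c by metis
  then show False using assms(1) by simp
qed

lemma leaf_end: assumes y: "y \<in> VT" and x: "x \<in> L" "x \<in> set (P y)" shows "x = y"
proof -
  obtain j where j: "j < length (P y)" "P y ! j = x" using x(2) by (auto simp: in_set_conv_nth)
  have l: "length (P y) = Suc (dep y)" using P_walk[OF y] by simp
  show ?thesis
  proof (cases "j = dep y")
    case True then show ?thesis using j last_nth_Suc[OF l] P_basic(3)[OF y] by simp
  next
    case False
    then have sj: "Suc j < length (P y)" using j l by simp
    have e1: "ET x (P y ! Suc j)" using succ_edge[OF P_walk(1)[OF y] sj] j by simp
    show ?thesis
    proof (cases j)
      case 0
      then have "x = r" using j P_basic(2)[OF y] P_basic(1)[OF y] by (simp add: hd_conv_nth)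
      then show ?thesis using rnl x by simp
    next
      case (Suc i)
      have "ET (P y ! i) x" using succ_edge[OF P_walk(1)[OF y], of i] j Suc by simp
      then have e2: "ET x (P y ! i)" by (rule symE)
      have "P y ! i \<noteq> P y ! Suc j" using P_distinct[OF y] sj Suc by (simp add: nth_eq_iff_index_eq)
      then show ?thesis using two_nbrs[OF _ e2 e1] x by simp
    qed
  qed
qed

lemma leaf_split: assumes "u \<in> L" "v \<in> L" "u \<noteq> v"
  shows "\<exists>C a b s t. a \<noteq> b \<and> P u = C @ a # s \<and> P v = C @ b # t \<and> C \<noteq> []"
proof -
  have uv: "u \<in> VT" "v \<in> VT" using assms L_VT by auto
  have "P u \<noteq> P v" using P_basic(3)[OF uv(1)] P_basic(3)[OF uv(2)] assms(3) by metis
  moreover have "\<forall>t. P u \<noteq> P v @ t"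
  proof (intro allI notI)
    fix t assume "P u = P v @ t"
    then have "v \<in> set (P u)" using P_basic(1,3)[OF uv(2)] by (metis Un_iff last_in_set set_append)
    then show False using leaf_end[OF uv(1) assms(2)] assms(3) by simp
  qed
  moreover have "\<forall>t. P v \<noteq> P u @ t"
  proof (intro allI notI)
    fix t assume "P v = P u @ t"
    then have "u \<in> set (P v)" using P_basic(1,3)[OF uv(1)] by (metis Un_iff last_in_set set_append)
    then show False using leaf_end[OF uv(2) assms(1)] assms(3) by simp
  qed
  ultimately obtain C a b s t where cs: "a \<noteq> b" "P u = C @ a # s" "P v = C @ b # t"
    using list_split by blast
  have "C \<noteq> []"
  proof
    assume "C = []"
    then have "a = r" "b = r" using cs P_basic(2) uv by (metis append_Nil list.sel(1))+
    then show False using cs by simp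
  qed
  then show ?thesis using cs by blast
qed

end


context rtree2 begin

lemma dist_leaves:
  assumes uv: "u \<in> L" "v \<in> L" and cs: "a \<noteq> b" "P u = C @ a # s" "P v = C @ b # t" "C \<noteq> []"
  shows "D u v = length s + length t + 2"
proof -
  have u: "u \<in> VT" and v: "v \<in> VT" using uv L_VT by auto
  define c where "c = length C - 1"
  have cl: "length C = Suc c" using cs(4) c_def by (cases C) auto
  define w where "w = last C"
  have dc: "drop c C = [w]"
  proof -
    have "length (drop c C) = 1" using cl by simp
    then obtain x where x: "drop c C = [x]" by (metis One_nat_def length_0_conv length_Suc_conv)
    have "last C = last (take c C @ drop c C)" by simp
    then have "last C = x" using x by simp
    then show ?thesis using x w_def by simp
  qed
  have lu: "length (P u) = Suc (dep u)" using P_walk[OF u] by simp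
  have lv: "length (P v) = Suc (dep v)" using P_walk[OF v] by simp
  have du: "dep u = Suc c + length s" using lu cs(2) cl by simp
  have dv: "dep v = Suc c + length t" using lv cs(3) cl by simp
  have cw: "C ! c = w" using cs(4) cl w_def by (simp add: last_conv_nth)
  have puc: "P u ! c = w" using cs(2) cl cw by (simp add: nth_append)
  have pvc: "P v ! c = w" using cs(3) cl cw by (simp add: nth_append)
  have pua: "P u ! Suc c = a" using cs(2) cl by (simp add: nth_append)
  have cu: "c < length (P u)" "Suc c < length (P u)" using cs(2) cl by auto
  have cv: "c < length (P v)" using cs(3) cl by auto
  have wV: "w \<in> VT" using P_basic(4)[OF u] cu puc by (metis nth_mem subsetD)
  have dw: "dep w = c" using P_nth(1)[OF u cu(1)] puc by simp
  have Pa: "P a = C @ [a]" using P_nth(2)[OF u cu(2)] pua cs(2) cl by simp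
  have d1: "drop c (P u) = w # a # s" using cs(2) dc cl by simp
  have d2: "drop c (P v) = w # b # t" using cs(3) dc cl by simp
  have w1: "is_walk VT ET (w # a # s) w u" using walk_suffix[OF P_walk(1)[OF u] cu(1)] d1 puc by simp
  have w2: "is_walk VT ET (w # b # t) w v" using walk_suffix[OF P_walk(1)[OF v] cv] d2 pvc by simp
  have "is_walk VT ET (rev (w # a # s) @ tl (w # b # t)) u v" by (rule walk_join[OF rev_walk[OF w1] w2])
  from dist_le[OF this] have up: "D u v \<le> length s + length t + 2" by simp
  obtain W where W: "is_walk VT ET W u v" "length W = Suc (D u v)" using shortest[OF u v] by blast
  define S where "S = {x \<in> VT. a \<in> set (P x)}"
  have "u \<in> S" using cs(2) u S_def by simp
  moreover have vS: "v \<notin> S"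
  proof
    assume "v \<in> S"
    then obtain t' where "P v = P a @ t'" using mem_P[OF v] S_def by blast
    then show False using cs Pa by simp
  qed
  ultimately obtain i where i: "Suc i < length W" "W ! i \<in> S" "W ! Suc i \<notin> S"
    using first_exit[of W S] W(1) by (auto simp: walk_iff)
  have e: "ET (W ! i) (W ! Suc i)" using succ_edge[OF W(1) i(1)] .
  have xV: "W ! i \<in> VT" and yV: "W ! Suc i \<in> VT" using inV[OF e] by auto
  have wi: "W ! Suc i = w"
  proof (cases "dep (W ! Suc i) = dep (W ! i) + 1")
    case True
    then have "P (W ! Suc i) = P (W ! i) @ [W ! Suc i]" using edge_P[OF symE[OF e]] by simp
    then have "W ! Suc i \<in> S" using i(2) yV S_def by auto
    then show ?thesis using i(3) by simp
  next
    case False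
    then have dd: "dep (W ! i) = dep (W ! Suc i) + 1" using edge_dep[OF e] by simp
    have px: "P (W ! i) = P (W ! Suc i) @ [W ! i]" using edge_P[OF e dd] .
    have "a \<notin> set (P (W ! Suc i))" using i(3) yV S_def by simp
    then have "a = W ! i" using i(2) px S_def by auto
    then have "P (W ! Suc i) = C" using px Pa by simp
    then show ?thesis using P_basic(3)[OF yV] w_def by simp
  qed
  have "is_walk VT ET (take (Suc (Suc i)) W) u (W ! Suc i)" using walk_prefix[OF W(1), of "Suc (Suc i)"] i(1) by simp
  from dist_le[OF this] have duw: "D u w \<le> Suc i" using wi i(1) by simp
  have "is_walk VT ET (drop (Suc i) W) (W ! Suc i) v" using walk_suffix[OF W(1) i(1)] .
  from dist_le[OF this] have dwv: "D w v \<le> length W - Suc i - 1" using wi by simp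
  have "dep u \<le> dep w + D w u" using tri[OF rin wV u] unfolding dep_def .
  then have a1: "D u w \<ge> Suc (length s)" using dist_sym[OF u wV] du dw by simp
  have "dep v \<le> dep w + D w v" using tri[OF rin wV v] unfolding dep_def .
  then have a2: "D w v \<ge> Suc (length t)" using dv dw by simp
  have "length s + length t + 2 \<le> D u v" using duw dwv a1 a2 W(2) i(1) by linarith
  then show ?thesis using up by simp
qed

end


context rtree2 begin

definition R :: "(nat \<times> nat) set" where
  "R = {(a,b). (a \<in> L \<and> b \<notin> L) \<or> ((a \<in> L \<longleftrightarrow> b \<in> L) \<and> a < b)}"

lemma R_trans: "trans R" unfolding R_def trans_def by auto
lemma R_irr: "\<forall>x. (x,x) \<notin> R" unfolding R_def by auto
lemma R_tot: "a \<noteq> b \<Longrightarrow> (a,b) \<in> R \<or> (b,a) \<in> R" unfolding R_def by auto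
lemma R_leaf: "(a,b) \<in> R \<Longrightarrow> b \<in> L \<Longrightarrow> a \<in> L" unfolding R_def by auto

lemma lex_split: "(a,b) \<in> R \<Longrightarrow> (C @ a # s, C @ b # t) \<in> lexord R"
  unfolding lexord_def by blast

definition pos :: "nat \<Rightarrow> nat" where "pos u = card {y \<in> L. (P y, P u) \<in> lexord R}"

lemma finL: "finite L" using fin L_VT finite_subset by blast

lemma pos_mono: assumes "u \<in> L" "(P u, P v) \<in> lexord R" shows "pos u < pos v"
proof -
  have "{y \<in> L. (P y, P u) \<in> lexord R} \<subset> {y \<in> L. (P y, P v) \<in> lexord R}"
  proof
    show "{y \<in> L. (P y, P u) \<in> lexord R} \<subseteq> {y \<in> L. (P y, P v) \<in> lexord R}"
      using lexord_trans[OF _ assms(2) R_trans] by blast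
    have "u \<notin> {y \<in> L. (P y, P u) \<in> lexord R}" using lexord_irreflexive[OF R_irr] by blast
    moreover have "u \<in> {y \<in> L. (P y, P v) \<in> lexord R}" using assms by blast
    ultimately show "{y \<in> L. (P y, P u) \<in> lexord R} \<noteq> {y \<in> L. (P y, P v) \<in> lexord R}" by blast
  qed
  then show ?thesis unfolding pos_def by (rule psubset_card_mono[rotated]) (use finL in auto)
qed

definition anc :: "nat \<Rightarrow> nat \<Rightarrow> nat" where "anc n u = P u ! (dep u - n)"
definition sub :: "nat \<Rightarrow> nat set" where "sub x = {y \<in> L. x \<in> set (P y)}"
definition lo :: "nat \<Rightarrow> nat" where "lo x = Min (pos ` sub x)"
definition hi :: "nat \<Rightarrow> nat" where "hi x = Max (pos ` sub x)"

lemma finsub: "finite (pos ` sub x)" unfolding sub_def using finL by simp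

lemma in_sub: assumes "y \<in> L" "x \<in> set (P y)" shows "lo x \<le> pos y" "pos y \<le> hi x"
proof -
  have "pos y \<in> pos ` sub x" using assms sub_def by blast
  then show "lo x \<le> pos y" "pos y \<le> hi x" unfolding lo_def hi_def using finsub by auto
qed

lemma anc_in: assumes "u \<in> L" shows "anc n u \<in> set (P u)"
proof -
  have "u \<in> VT" using assms L_VT by auto
  then have "dep u - n < length (P u)" using P_walk(2) by simp
  then show ?thesis unfolding anc_def by simp
qed

lemma sub_prefix:
  assumes u: "u \<in> L" and pu: "P u = C @ a # s" and j: "length C \<le> j" "j < length (P u)"
    and y: "y \<in> L" "P u ! j \<in> set (P y)"
  shows "\<exists>s'. P y = C @ a # s'"
proof -
  have uV: "u \<in> VT" and yV: "y \<in> VT" using u y L_VT by auto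
  obtain t0 where t0: "P y = P (P u ! j) @ t0" using mem_P[OF yV y(2)] by blast
  have "P (P u ! j) = take (Suc j) (P u)" using P_nth(2)[OF uV j(2)] .
  also have "\<dots> = C @ a # take (j - length C) s" using pu j(1)
    by (simp add: take_append Suc_diff_le)
  finally show ?thesis using t0 by auto
qed

lemma sep:
  assumes u: "u \<in> L" and pu: "P u = C @ a # s" and j: "length C \<le> j" "j < length (P u)"
    and v: "v \<in> L" and pv: "P v = C @ b # t" and j': "length C \<le> j'" "j' < length (P v)"
    and ab: "(a,b) \<in> R"
  shows "hi (P u ! j) < lo (P v ! j')"
proof -
  have "u \<in> sub (P u ! j)" unfolding sub_def using u nth_mem[OF j(2)] by blast
  then have ne1: "sub (P u ! j) \<noteq> {}" by (metis empty_iff)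
  have "v \<in> sub (P v ! j')" unfolding sub_def using v nth_mem[OF j'(2)] by blast
  then have ne2: "sub (P v ! j') \<noteq> {}" by (metis empty_iff)
  have "pos y < pos y'" if h1: "y \<in> sub (P u ! j)" and h2: "y' \<in> sub (P v ! j')" for y y'
  proof -
    have y1: "y \<in> L" "P u ! j \<in> set (P y)" using h1 unfolding sub_def by auto
    have y2: "y' \<in> L" "P v ! j' \<in> set (P y')" using h2 unfolding sub_def by auto
    obtain s' where s': "P y = C @ a # s'" using sub_prefix[OF u pu j y1] by blast
    obtain t' where t': "P y' = C @ b # t'" using sub_prefix[OF v pv j' y2] by blast
    have "(P y, P y') \<in> lexord R" unfolding s' t' by (rule lex_split[OF ab])
    then show ?thesis using pos_mono y1(1) by blast
  qed
  note lt = this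
  have "hi (P u ! j) \<in> pos ` sub (P u ! j)" unfolding hi_def using finsub ne1 by (intro Max_in) auto
  then obtain y where y: "y \<in> sub (P u ! j)" "hi (P u ! j) = pos y" by auto
  have "lo (P v ! j') \<in> pos ` sub (P v ! j')" unfolding lo_def using finsub ne2 by (intro Min_in) auto
  then obtain y' where y': "y' \<in> sub (P v ! j')" "lo (P v ! j') = pos y'" by auto
  show ?thesis using lt[OF y(1) y'(1)] y(2) y'(2) by simp
qed

lemma interval_main:
  assumes u: "u \<in> L" and v: "v \<in> L" and pu: "P u = C @ a # s" and pv: "P v = C @ b # t"
    and ab: "(a,b) \<in> R" and C: "C \<noteq> []"
  shows "lo (anc al v) \<le> hi (anc be u) \<longleftrightarrow> (Suc (length s) \<le> be \<or> Suc (length t) \<le> al)"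
proof -
  have uV: "u \<in> VT" and vV: "v \<in> VT" using u v L_VT by auto
  have lu: "length (P u) = Suc (dep u)" using P_walk[OF uV] by simp
  have lv: "length (P v) = Suc (dep v)" using P_walk[OF vV] by simp
  have du: "dep u = length C + length s" using lu pu by simp
  have dv: "dep v = length C + length t" using lv pv by simp
  show ?thesis
  proof
    assume "lo (anc al v) \<le> hi (anc be u)"
    show "Suc (length s) \<le> be \<or> Suc (length t) \<le> al"
    proof (rule ccontr)
      assume "\<not> ?thesis"
      then have "length C \<le> dep u - be" "length C \<le> dep v - al" using du dv by auto
      then have "hi (anc be u) < lo (anc al v)" unfolding anc_def
        using sep[OF u pu _ _ v pv _ _ ab] lu lv by simp
      then show False using \<open>lo (anc al v) \<le> hi (anc be u)\<close> by simp
    qed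
  next
    assume "Suc (length s) \<le> be \<or> Suc (length t) \<le> al"
    then show "lo (anc al v) \<le> hi (anc be u)"
    proof
      assume h: "Suc (length s) \<le> be"
      then have i: "dep u - be < length C" using du C by (cases C) auto
      then have "anc be u = C ! (dep u - be)" unfolding anc_def using pu by (simp add: nth_append)
      then have "anc be u \<in> set (P v)" using i pv by simp
      then have "pos v \<le> hi (anc be u)" using in_sub[OF v] by blast
      moreover have "lo (anc al v) \<le> pos v" using in_sub[OF v anc_in[OF v]] by blast
      ultimately show ?thesis by simp
    next
      assume h: "Suc (length t) \<le> al"
      then have i: "dep v - al < length C" using dv C by (cases C) auto
      then have "anc al v = C ! (dep v - al)" unfolding anc_def using pv by (simp add: nth_append)
      then have "anc al v \<in> set (P u)" using i pu by simp
      then have "lo (anc al v) \<le> pos u" using in_sub[OF u] by blast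
      moreover have "pos u \<le> hi (anc be u)" using in_sub[OF u anc_in[OF u]] by blast
      ultimately show ?thesis by simp
    qed
  qed
qed

end


lemma arith_key:
  fixes p q k :: nat
  assumes "2 \<le> k" "q = 0 \<Longrightarrow> p = 0"
  shows "p + q + 2 \<le> k \<longleftrightarrow> (\<forall>i<k-1. Suc p \<le> k - 2 - i \<or> Suc q \<le> Suc i)"
proof
  assume "p + q + 2 \<le> k"
  then show "\<forall>i<k-1. Suc p \<le> k - 2 - i \<or> Suc q \<le> Suc i" by auto
next
  assume h: "\<forall>i<k-1. Suc p \<le> k - 2 - i \<or> Suc q \<le> Suc i"
  show "p + q + 2 \<le> k"
  proof (rule ccontr)
    assume c: "\<not> p + q + 2 \<le> k"
    show False
    proof (cases "p + 2 \<le> k")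
      case True
      have "k - p - 2 < k - 1" using True by arith
      then have "Suc p \<le> k - 2 - (k - p - 2) \<or> Suc q \<le> Suc (k - p - 2)" using h by blast
      then show False using c True by arith
    next
      case False
      have "0 < k - 1" using assms(1) by arith
      then have "Suc p \<le> k - 2 - 0 \<or> Suc q \<le> Suc 0" using h by blast
      then show False using c False assms by arith
    qed
  qed
qed

lemma box_int:
  "box_t t l1 r1 \<inter> box_t t l2 r2 \<noteq> {} \<longleftrightarrow> (\<forall>i<t. max (l1 i) (l2 i) \<le> min (r1 i) (r2 i))"
proof
  assume "box_t t l1 r1 \<inter> box_t t l2 r2 \<noteq> {}"
  then obtain x where x: "x \<in> box_t t l1 r1" "x \<in> box_t t l2 r2" by blast
  show "\<forall>i<t. max (l1 i) (l2 i) \<le> min (r1 i) (r2 i)"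
  proof (intro allI impI)
    fix i assume "i < t"
    then have "l1 i \<le> x i" "x i \<le> r1 i" "l2 i \<le> x i" "x i \<le> r2 i" using x unfolding box_t_def by auto
    then show "max (l1 i) (l2 i) \<le> min (r1 i) (r2 i)" by simp
  qed
next
  assume h: "\<forall>i<t. max (l1 i) (l2 i) \<le> min (r1 i) (r2 i)"
  define x where "x = (\<lambda>i. if i < t then max (l1 i) (l2 i) else (0::real))"
  have "x \<in> box_t t l1 r1" "x \<in> box_t t l2 r2" using h unfolding box_t_def x_def by auto
  then show "box_t t l1 r1 \<inter> box_t t l2 r2 \<noteq> {}" by blast
qed

context rtree begin

lemma two_nbrs': assumes "a \<noteq> b" "ET x a" "ET x b" shows "x \<notin> leaves VT ET"
proof
  assume "x \<in> leaves VT ET"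
  then have c: "card {y \<in> VT. ET x y} = 1" unfolding leaves_def by simp
  have "{a, b} \<subseteq> {y \<in> VT. ET x y}" using assms inV by blast
  moreover have "finite {y \<in> VT. ET x y}" using fin by simp
  ultimately have "card {a, b} \<le> 1" using card_mono c by metis
  then show False using assms(1) by simp
qed

lemma all_leaves_close:
  assumes all: "\<forall>x\<in>VT. x \<in> leaves VT ET" and u: "u \<in> VT" and v: "v \<in> VT"
  shows "D u v \<le> 1"
proof -
  obtain W where W: "is_walk VT ET W u v" using conn[OF u v] by blast
  obtain ys where ys: "is_walk VT ET ys u v" "distinct ys" "length ys \<le> length W" using walk_distinct[OF W] by blast
  have "length ys \<le> 2"
  proof (rule ccontr)
    assume "\<not> length ys \<le> 2"
    then have l: "2 < length ys" by simp
    have e1: "ET (ys ! 0) (ys ! 1)" using succ_edge[OF ys(1), of 0] l by simp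
    have e2: "ET (ys ! 1) (ys ! 2)" using succ_edge[OF ys(1), of 1] l by (simp add: numeral_2_eq_2)
    have "ys \<noteq> []" using l by auto
    then have "ys ! 0 \<noteq> ys ! 2" using nth_eq_iff_index_eq[OF ys(2), of 0 2] l by simp
    then have "ys ! 1 \<notin> leaves VT ET" by (rule two_nbrs'[OF _ symE[OF e1] e2])
    moreover have "ys ! 1 \<in> VT" using inV[OF e2] by simp
    ultimately show False using all by blast
  qed
  then show ?thesis using dist_le[OF ys(1)] by simp
qed

end

context rtree2 begin

lemma ordered_case:
  assumes k: "2 \<le> k" and u: "u \<in> L" and v: "v \<in> L" and pu: "P u = C @ a # s" and pv: "P v = C @ b # t"
    and ab: "(a,b) \<in> R" and ne: "a \<noteq> b" and C: "C \<noteq> []"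
  shows "D u v \<le> k \<longleftrightarrow> (\<forall>i<k-1. max (lo (anc (Suc i) u)) (lo (anc (Suc i) v))
                                   \<le> min (hi (anc (k-2-i) u)) (hi (anc (k-2-i) v)))"
proof -
  have uV: "u \<in> VT" and vV: "v \<in> VT" using u v L_VT by auto
  have "(P u, P v) \<in> lexord R" unfolding pu pv by (rule lex_split[OF ab])
  then have puv: "pos u < pos v" by (rule pos_mono[OF u])
  have each: "max (lo (anc al u)) (lo (anc al v)) \<le> min (hi (anc be u)) (hi (anc be v))
      \<longleftrightarrow> (Suc (length s) \<le> be \<or> Suc (length t) \<le> al)" for al be
  proof -
    have a1: "lo (anc al u) \<le> pos u" "pos u \<le> hi (anc be u)" using in_sub[OF u anc_in[OF u]] by auto
    have a2: "lo (anc al v) \<le> pos v" "pos v \<le> hi (anc be v)" using in_sub[OF v anc_in[OF v]] by auto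
    have "max (lo (anc al u)) (lo (anc al v)) \<le> min (hi (anc be u)) (hi (anc be v))
      \<longleftrightarrow> lo (anc al v) \<le> hi (anc be u)" using a1 a2 puv by (auto simp: max_def min_def)
    then show ?thesis using interval_main[OF u v pu pv ab C] by simp
  qed
  have q0: "s = []" if "t = []"
  proof -
    have "last (P v) = b" using pv that by simp
    then have "v = b" using P_basic(3)[OF vV] by simp
    then have aL: "a \<in> L" using R_leaf[OF ab] v by simp
    have aP: "a \<in> set (P u)" using pu by simp
    have au: "a = u" by (rule leaf_end[OF uV aL aP])
    show "s = []"
    proof (rule ccontr)
      assume "s \<noteq> []"
      then have "last (P u) = last s" using pu by simp
      then have "last s = a" using au P_basic(3)[OF uV] by simp
      then have "a \<in> set s" using \<open>s \<noteq> []\<close> by (metis last_in_set)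
      then show False using P_distinct[OF uV] pu by simp
    qed
  qed
  have "D u v = length s + length t + 2" using dist_leaves[OF u v ne pu pv C] .
  moreover have "length s + length t + 2 \<le> k \<longleftrightarrow>
     (\<forall>i<k-1. Suc (length s) \<le> k - 2 - i \<or> Suc (length t) \<le> Suc i)"
    by (rule arith_key[OF k]) (use q0 in auto)
  ultimately show ?thesis using each by simp
qed

lemma leaves_case:
  assumes k: "2 \<le> k" and u: "u \<in> L" and v: "v \<in> L" and uv: "u \<noteq> v"
  shows "D u v \<le> k \<longleftrightarrow> (\<forall>i<k-1. max (lo (anc (Suc i) u)) (lo (anc (Suc i) v))
                                   \<le> min (hi (anc (k-2-i) u)) (hi (anc (k-2-i) v)))"
proof -
  obtain C a b s t where cs: "a \<noteq> b" "P u = C @ a # s" "P v = C @ b # t" "C \<noteq> []"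
    using leaf_split[OF u v uv] by blast
  show ?thesis
  proof (cases "(a,b) \<in> R")
    case True then show ?thesis using ordered_case[OF k u v cs(2,3) True cs(1,4)] by simp
  next
    case False
    then have ba: "(b,a) \<in> R" using R_tot cs(1) by blast
    have "D v u \<le> k \<longleftrightarrow> (\<forall>i<k-1. max (lo (anc (Suc i) v)) (lo (anc (Suc i) u))
                                   \<le> min (hi (anc (k-2-i) v)) (hi (anc (k-2-i) u)))"
      using ordered_case[OF k v u cs(3,2) ba] cs(1,4) by simp
    moreover have "D v u = D u v"
    proof -
      have "u \<in> VT" "v \<in> VT" using u v L_VT by auto
      then show ?thesis by (rule dist_sym[symmetric])
    qed
    ultimately show ?thesis by (simp add: max.commute min.commute)
  qed
qed

end

theorem corollary1:
  fixes V :: "'a set" and E :: "'a \<Rightarrow> 'a \<Rightarrow> bool" and k :: nat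
  assumes "k \<ge> 2"
    and "simple_graph V E"
    and "leaf_power k V E"
  shows "boxicity V E \<le> k - 1"
proof -
  have ex: "\<exists>(VT::nat set) ET \<phi>. is_tree VT ET \<and> bij_betw \<phi> V (leaves VT ET)
     \<and> (\<forall>u\<in>V. \<forall>v\<in>V. u \<noteq> v \<longrightarrow> (E u v \<longleftrightarrow> graph_dist VT ET (\<phi> u) (\<phi> v) \<le> k))"
    using assms(3) unfolding leaf_power_def .
  obtain VT :: "nat set" and ET \<phi> where H: "is_tree VT ET \<and> bij_betw \<phi> V (leaves VT ET)
     \<and> (\<forall>u\<in>V. \<forall>v\<in>V. u \<noteq> v \<longrightarrow> (E u v \<longleftrightarrow> graph_dist VT ET (\<phi> u) (\<phi> v) \<le> k))"
    using ex by (elim exE) (erule that)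
  note T = H[THEN conjunct1]
  note bij = H[THEN conjunct2, THEN conjunct1]
  note adj = H[THEN conjunct2, THEN conjunct2]
  have phiL: "\<phi> x \<in> leaves VT ET" if "x \<in> V" for x using bij_betw_apply[OF bij that] .
  have phiI: "\<phi> x \<noteq> \<phi> y" if "x \<in> V" "y \<in> V" "x \<noteq> y" for x y
    using inj_on_contraD[OF bij_betw_imp_inj_on[OF bij] that(3,1,2)] .
  have "\<exists>l r. box_representation (k - 1) V E l r"
  proof (cases "\<exists>r\<in>VT. r \<notin> leaves VT ET")
    case True
    then obtain r where r: "r \<in> VT" "r \<notin> leaves VT ET" by blast
    interpret rtree2 VT ET r by unfold_locales (use T r in auto)
    define l where "l = (\<lambda>x i. real (lo (anc (Suc i) (\<phi> x))))"
    define rr where "rr = (\<lambda>x i. real (hi (anc (k - 2 - i) (\<phi> x))))"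
    have "box_representation (k - 1) V E l rr"
      unfolding box_representation_def
    proof (intro conjI ballI allI impI)
      fix x i assume x: "x \<in> V" and "i < k - 1"
      have "lo (anc (Suc i) (\<phi> x)) \<le> pos (\<phi> x)" "pos (\<phi> x) \<le> hi (anc (k - 2 - i) (\<phi> x))"
        using in_sub[OF phiL[OF x] anc_in[OF phiL[OF x]]] by auto
      then show "l x i \<le> rr x i" unfolding l_def rr_def by simp
    next
      fix x y assume x: "x \<in> V" and y: "y \<in> V" and xy: "x \<noteq> y"
      have "E x y \<longleftrightarrow> D (\<phi> x) (\<phi> y) \<le> k" using adj x y xy by blast
      also have "\<dots> \<longleftrightarrow> (\<forall>i<k-1. max (lo (anc (Suc i) (\<phi> x))) (lo (anc (Suc i) (\<phi> y)))
                                   \<le> min (hi (anc (k-2-i) (\<phi> x))) (hi (anc (k-2-i) (\<phi> y))))"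
        by (rule leaves_case[OF assms(1) phiL[OF x] phiL[OF y] phiI[OF x y xy]])
      also have "\<dots> \<longleftrightarrow> (\<forall>i<k-1. max (l x i) (l y i) \<le> min (rr x i) (rr y i))"
        unfolding l_def rr_def by simp
      also have "\<dots> \<longleftrightarrow> box_t (k - 1) (l x) (rr x) \<inter> box_t (k - 1) (l y) (rr y) \<noteq> {}"
        by (rule box_int[symmetric])
      finally show "E x y \<longleftrightarrow> box_t (k - 1) (l x) (rr x) \<inter> box_t (k - 1) (l y) (rr y) \<noteq> {}" .
    qed
    then show ?thesis by blast
  next
    case False
    have "VT \<noteq> {}" using T unfolding is_tree_def by simp
    then obtain r where r: "r \<in> VT" by blast
    interpret rtree VT ET r by unfold_locales (use T r in auto)
    have all: "\<forall>x\<in>VT. x \<in> leaves VT ET" using False by blast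
    have "box_representation (k - 1) V E (\<lambda>_ _. 0) (\<lambda>_ _. 0)"
      unfolding box_representation_def
    proof (intro conjI)
      show "\<forall>v\<in>V. \<forall>i<k - 1. (0::real) \<le> 0" by simp
    next
     show "\<forall>u\<in>V. \<forall>v\<in>V. u \<noteq> v \<longrightarrow> E u v = (box_t (k - 1) (\<lambda>_. 0) (\<lambda>_. 0) \<inter> box_t (k - 1) (\<lambda>_. 0) (\<lambda>_. 0) \<noteq> {})"
     proof (intro ballI impI)
      fix x y assume x: "x \<in> V" and y: "y \<in> V" and xy: "x \<noteq> y"
      have "\<phi> x \<in> VT" "\<phi> y \<in> VT" using phiL x y unfolding leaves_def by auto
      then have "D (\<phi> x) (\<phi> y) \<le> 1" using all_leaves_close[OF all] by blast
      then have "E x y" using adj x y xy assms(1) by auto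
      moreover have "box_t (k - 1) (\<lambda>_. 0) (\<lambda>_. 0) \<inter> box_t (k - 1) (\<lambda>_. 0) (\<lambda>_. 0) \<noteq> {}"
        using box_int[of "k - 1" "\<lambda>_. (0::real)" "\<lambda>_. 0" "\<lambda>_. 0" "\<lambda>_. 0"] by simp
      ultimately show "E x y \<longleftrightarrow> box_t (k - 1) (\<lambda>_. 0) (\<lambda>_. 0) \<inter> box_t (k - 1) (\<lambda>_. 0) (\<lambda>_. 0) \<noteq> {}" by simp
     qed
    qed
    then show ?thesis by blast
  qed
  then show ?thesis unfolding boxicity_def by (rule Least_le)
qed


end
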